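(* Let $\{\psi_j\}_{j=1}^N$ be an orthonormal system in $\ell^2(\mathbb Z)$. Then $$\sum_{n\in\mathbb Z}\Big(\sum_{j=1}^N|\psi_j(n)|^2\Big)^3\le\sum_{j=1}^N\sum_{n\in\mathbb Z}|D\psi_j(n)|^2,$$ where $D\psi(n)=\psi(n+1)-\psi(n)$. *)

theory Defs
  imports "HOL-Analysis.Analysis"
begin

definition in_l2 :: "(int \<Rightarrow> complex) \<Rightarrow> bool" where
  "in_l2 f \<longleftrightarrow> (\<lambda>n. (norm (f n))^2) summable_on UNIV"

definition l2_inner :: "(int \<Rightarrow> complex) \<Rightarrow> (int \<Rightarrow> complex) \<Rightarrow> complex" where
  "l2_inner f g = (\<Sum>\<^sub>\<infinity>n. f n * cnj (g n))"

definition Dfwd :: "(int \<Rightarrow> complex) \<Rightarrow> int \<Rightarrow> complex" where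
  "Dfwd f n = f (n + 1) - f n"

end

theory Submission imports Defs begin

lemma sq_sum_le: "((a::real)+b)^2 \<le> 2*a^2+2*b^2"
  using sum_squares_bound[of a b] by (simp add: power2_sum)

lemma prod_le: "(a::real) \<ge> 0 \<Longrightarrow> b \<ge> 0 \<Longrightarrow> a*b \<le> a^2+b^2"
  using sum_squares_bound[of a b] mult_nonneg_nonneg[of a b] by linarith

lemma sq_add_le: "(norm (a + b::complex))^2 \<le> 2*(norm a)^2 + 2*(norm b)^2"
proof -
  have "norm (a+b) \<le> norm a + norm b" by (rule norm_triangle_ineq)
  hence "(norm (a+b))^2 \<le> (norm a + norm b)^2" by (simp add: power_mono)
  also have "\<dots> \<le> 2*(norm a)^2 + 2*(norm b)^2"
    by (rule sq_sum_le)
  finally show ?thesis .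
qed

lemma sq_diff_le: "(norm (a - b::complex))^2 \<le> 2*(norm a)^2 + 2*(norm b)^2"
  using sq_add_le[of a "-b"] by simp

lemma l2_add: assumes "in_l2 f" "in_l2 g" shows "in_l2 (\<lambda>n. f n + g n)"
proof -
  have s: "(\<lambda>n. 2*(norm (f n))^2 + 2*(norm (g n))^2) summable_on UNIV"
    using assms unfolding in_l2_def by (intro summable_on_add summable_on_cmult_right)
  show ?thesis unfolding in_l2_def
    by (rule summable_on_comparison_test[OF s]) (simp_all add: sq_add_le)
qed

lemma l2_scale: assumes "in_l2 f" shows "in_l2 (\<lambda>n. c * f n)"
proof -
  have "(\<lambda>n. (norm c)^2 * (norm (f n))^2) summable_on UNIV"
    using assms unfolding in_l2_def by (rule summable_on_cmult_right)
  thus ?thesis unfolding in_l2_def by (simp add: norm_mult power_mult_distrib)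
qed

lemma l2_zero: "in_l2 (\<lambda>n. 0)" unfolding in_l2_def by simp

lemma l2_sum: "finite S \<Longrightarrow> (\<And>j. j\<in>S \<Longrightarrow> in_l2 (f j)) \<Longrightarrow> in_l2 (\<lambda>n. \<Sum>j\<in>S. f j n)"
  by (induction S rule: finite_induct) (auto intro: l2_add l2_zero)

lemma l2_shift_summ: "in_l2 f \<Longrightarrow> (\<lambda>n. (norm (f (n+1)))^2) summable_on UNIV"
  unfolding in_l2_def
proof -
  assume "(\<lambda>n. (norm (f n))^2) summable_on UNIV"
  moreover have "(\<lambda>n. (norm (f (n+1)))^2) summable_on UNIV \<longleftrightarrow> (\<lambda>n. (norm (f n))^2) summable_on UNIV"
    by (rule summable_on_reindex_bij_witness[where S=UNIV and T=UNIV and i="\<lambda>n. n - 1" and j="\<lambda>n. n+1"]) simp_all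
  ultimately show ?thesis by simp
qed

lemma l2_shift_sum: "infsum (\<lambda>n. (norm ((f::int\<Rightarrow>complex) (n+1)))^2) UNIV = infsum (\<lambda>n. (norm (f n))^2) UNIV"
  by (rule infsum_reindex_bij_witness[where S=UNIV and T=UNIV and i="\<lambda>n. n - 1" and j="\<lambda>n. n+1"]) simp_all

lemma l2_D: assumes "in_l2 f" shows "in_l2 (Dfwd f)"
proof -
  have s: "(\<lambda>n. 2*(norm (f (n+1)))^2 + 2*(norm (f n))^2) summable_on UNIV"
    using assms l2_shift_summ[OF assms] unfolding in_l2_def by (intro summable_on_add summable_on_cmult_right)
  show ?thesis unfolding in_l2_def Dfwd_def
    by (rule summable_on_comparison_test[OF s]) (simp_all add: sq_diff_le)
qed

lemma l2_prod: assumes "in_l2 f" "in_l2 g" shows "(\<lambda>n. f n * cnj (g n)) summable_on UNIV"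
proof -
  have s: "(\<lambda>n. (norm (f n))^2 + (norm (g n))^2) summable_on UNIV"
    using assms unfolding in_l2_def by (intro summable_on_add)
  have "(\<lambda>n. norm (f n * cnj (g n))) summable_on UNIV"
    by (rule summable_on_comparison_test[OF s]) (simp_all add: norm_mult prod_le)
  thus ?thesis by (rule abs_summable_summable)
qed

lemma fin_le: assumes "in_l2 g"
  shows "(\<Sum>i<K. (norm (g (c + int i)))^2) \<le> infsum (\<lambda>n. (norm (g n))^2) UNIV"
proof -
  have inj: "inj_on (\<lambda>i. c + int i) {..<K}" by (auto simp: inj_on_def)
  have "(\<Sum>i<K. (norm (g (c + int i)))^2) = sum (\<lambda>n. (norm (g n))^2) ((\<lambda>i. c + int i) ` {..<K})"
    by (simp add: sum.reindex[OF inj])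
  also have "\<dots> \<le> infsum (\<lambda>n. (norm (g n))^2) UNIV"
    using assms unfolding in_l2_def by (intro finite_sum_le_infsum) auto
  finally show ?thesis .
qed

lemma tail_left: assumes "in_l2 g" "e > 0" shows "\<exists>a<n. (norm (g a))^2 < e"
proof (rule ccontr)
  assume "\<not> ?thesis"
  hence ge: "\<And>a. a < n \<Longrightarrow> (norm (g a))^2 \<ge> e" by force
  define A where "A = infsum (\<lambda>n. (norm (g n))^2) UNIV"
  define K where "K = nat (ceiling (A/e)) + 1"
  have "real K * e = (\<Sum>i<K. e)" by simp
  also have "\<dots> \<le> (\<Sum>i<K. (norm (g ((n - int K) + int i)))^2)"
    by (intro sum_mono ge) auto
  also have "\<dots> \<le> A" unfolding A_def by (rule fin_le[OF assms(1)])
  finally have "real K * e \<le> A" .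
  moreover have "A/e < real K" unfolding K_def by linarith
  hence "A < real K * e" using assms(2) by (simp add: field_simps)
  ultimately show False by linarith
qed

lemma tail_right: assumes "in_l2 g" "e > 0" shows "\<exists>b>n. (norm (g b))^2 < e"
proof (rule ccontr)
  assume "\<not> ?thesis"
  hence ge: "\<And>a. a > n \<Longrightarrow> (norm (g a))^2 \<ge> e" by force
  define A where "A = infsum (\<lambda>n. (norm (g n))^2) UNIV"
  define K where "K = nat (ceiling (A/e)) + 1"
  have "real K * e = (\<Sum>i<K. e)" by simp
  also have "\<dots> \<le> (\<Sum>i<K. (norm (g ((n + 1) + int i)))^2)"
    by (intro sum_mono ge) auto
  also have "\<dots> \<le> A" unfolding A_def by (rule fin_le[OF assms(1)])
  finally have "real K * e \<le> A" .
  moreover have "A/e < real K" unfolding K_def by linarith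
  hence "A < real K * e" using assms(2) by (simp add: field_simps)
  ultimately show False by linarith
qed


lemma sq_diff_bound: "\<bar>(norm (x::complex))^2 - (norm y)^2\<bar> \<le> norm (x - y) * (norm y + norm x)"
proof -
  have e: "(norm x)^2 - (norm y)^2 = (norm x - norm y) * (norm y + norm x)"
    by (simp add: power2_eq_square algebra_simps)
  have "\<bar>(norm x)^2 - (norm y)^2\<bar> = \<bar>norm x - norm y\<bar> * \<bar>norm y + norm x\<bar>"
    unfolding e by (rule abs_mult)
  also have "\<bar>norm y + norm x\<bar> = norm y + norm x" by simp
  finally have "\<bar>(norm x)^2 - (norm y)^2\<bar> = \<bar>norm x - norm y\<bar> * (norm y + norm x)" .
  also have "\<dots> \<le> norm (x - y) * (norm y + norm x)"
    by (intro mult_right_mono norm_triangle_ineq3) auto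
  finally show ?thesis .
qed

lemma sobolev:
  assumes g: "in_l2 g"
  shows "(norm (g n))^2 \<le> sqrt (infsum (\<lambda>m. (norm (g m))^2) UNIV) * sqrt (infsum (\<lambda>m. (norm (Dfwd g m))^2) UNIV)"
proof (rule field_le_epsilon)
  fix e :: real assume e: "e > 0"
  define A where "A = infsum (\<lambda>m. (norm (g m))^2) UNIV"
  define B where "B = infsum (\<lambda>m. (norm (Dfwd g m))^2) UNIV"
  have A0: "A \<ge> 0" unfolding A_def by (rule infsum_nonneg) auto
  have B0: "B \<ge> 0" unfolding B_def by (rule infsum_nonneg) auto
  obtain a where a: "a < n" "(norm (g a))^2 < e" using tail_left[OF g e] by blast
  obtain b where b: "b > n" "(norm (g b))^2 < e" using tail_right[OF g e] by blast
  define K where "K = nat (b - a)"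
  define k0 where "k0 = nat (n - a)"
  define t where "t i = (norm (g (a + int i)))^2" for i
  define u where "u i = norm (g (a + int i))" for i
  define d where "d i = norm (Dfwd g (a + int i))" for i
  define D where "D i = t (Suc i) - t i" for i
  have k0K: "k0 \<le> K" unfolding k0_def K_def using a b by auto
  have t0: "t 0 < e" using a unfolding t_def by simp
  have tK: "t K < e" using a b unfolding t_def K_def by simp
  have tk0: "t k0 = (norm (g n))^2" using a unfolding t_def k0_def by simp
  have Dle: "\<bar>D i\<bar> \<le> d i * (u i + u (Suc i))" for i
    using sq_diff_bound[of "g (a + (1 + int i))" "g (a + int i)"]
    unfolding D_def d_def u_def t_def Dfwd_def by (simp add: add_ac)
  have s1: "(\<Sum>i<k0. D i) = t k0 - t 0" unfolding D_def by (rule sum_lessThan_telescope)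
  have s2: "(\<Sum>i<K. D i) = t K - t 0" unfolding D_def by (rule sum_lessThan_telescope)
  have split: "(\<Sum>i<K. f i) = (\<Sum>i<k0. f i) + (\<Sum>i\<in>{k0..<K}. f i)" for f :: "nat \<Rightarrow> real"
  proof -
    have "{..<K} = {..<k0} \<union> {k0..<K}" using k0K by auto
    thus ?thesis by (simp add: sum.union_disjoint ivl_disj_int)
  qed
  have "2 * t k0 - t 0 - t K = (\<Sum>i<k0. D i) - (\<Sum>i\<in>{k0..<K}. D i)"
    using s1 s2 split[of D] by simp
  also have "\<dots> \<le> (\<Sum>i<k0. \<bar>D i\<bar>) + (\<Sum>i\<in>{k0..<K}. \<bar>D i\<bar>)"
  proof -
    have "(\<Sum>i<k0. D i) - (\<Sum>i\<in>{k0..<K}. D i) \<le> \<bar>\<Sum>i<k0. D i\<bar> + \<bar>\<Sum>i\<in>{k0..<K}. D i\<bar>" by linarith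
    also have "\<dots> \<le> (\<Sum>i<k0. \<bar>D i\<bar>) + (\<Sum>i\<in>{k0..<K}. \<bar>D i\<bar>)" by (intro add_mono sum_abs)
    finally show ?thesis .
  qed
  also have "\<dots> = (\<Sum>i<K. \<bar>D i\<bar>)" using split[of "\<lambda>i. \<bar>D i\<bar>"] by simp
  also have "\<dots> \<le> (\<Sum>i<K. d i * (u i + u (Suc i)))" by (intro sum_mono Dle)
  also have "\<dots> \<le> 2 * sqrt A * sqrt B"
  proof -
    have cs: "(\<Sum>i<K. d i * (u i + u (Suc i)))^2 \<le> (\<Sum>i<K. (d i)^2) * (\<Sum>i<K. (u i + u (Suc i))^2)"
      by (rule Cauchy_Schwarz_ineq_sum)
    have dB: "(\<Sum>i<K. (d i)^2) \<le> B" unfolding d_def B_def by (rule fin_le[OF l2_D[OF g]])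
    have "(\<Sum>i<K. (u i + u (Suc i))^2) \<le> (\<Sum>i<K. 2*(u i)^2 + 2*(u (Suc i))^2)"
      by (intro sum_mono sq_sum_le)
    also have "\<dots> = 2*(\<Sum>i<K. (u i)^2) + 2*(\<Sum>i<K. (u (Suc i))^2)"
      by (simp add: sum.distrib sum_distrib_left)
    also have "\<dots> \<le> 2*A + 2*A"
    proof -
      have "(\<Sum>i<K. (u i)^2) \<le> A" unfolding u_def A_def by (rule fin_le[OF g])
      moreover have "(\<Sum>i<K. (u (Suc i))^2) \<le> A" unfolding u_def A_def
        using fin_le[OF g, where K=K and c="a+1"] by (simp add: add_ac)
      ultimately show ?thesis by linarith
    qed
    finally have uA: "(\<Sum>i<K. (u i + u (Suc i))^2) \<le> 4 * A" by simp
    have "(\<Sum>i<K. d i * (u i + u (Suc i)))^2 \<le> B * (4 * A)"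
    proof -
      have "(\<Sum>i<K. (d i)^2) * (\<Sum>i<K. (u i + u (Suc i))^2) \<le> B * (4 * A)"
        by (rule mult_mono[OF dB uA B0]) (simp add: sum_nonneg)
      thus ?thesis using cs by linarith
    qed
    hence "(\<Sum>i<K. d i * (u i + u (Suc i))) \<le> sqrt (B * (4*A))" by (rule real_le_rsqrt)
    also have "\<dots> = 2 * sqrt A * sqrt B" by (simp add: real_sqrt_mult)
    finally show ?thesis .
  qed
  finally have "2 * t k0 - t 0 - t K \<le> 2 * sqrt A * sqrt B" .
  thus "(norm (g n))^2 \<le> sqrt A * sqrt B + e" using t0 tK tk0 by linarith
qed


lemma has_sum_finite_sum:
  fixes f :: "'i \<Rightarrow> 'a \<Rightarrow> 'b::topological_comm_monoid_add"
  assumes "finite S" "\<And>i. i \<in> S \<Longrightarrow> (f i has_sum s i) A"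
  shows "((\<lambda>x. \<Sum>i\<in>S. f i x) has_sum (\<Sum>i\<in>S. s i)) A"
  using assms
proof (induction S rule: finite_induct)
  case empty then show ?case by simp
next
  case (insert i S)
  have "((\<lambda>x. f i x + (\<Sum>i\<in>S. f i x)) has_sum (s i + (\<Sum>i\<in>S. s i))) A"
    using insert by (intro has_sum_add) auto
  thus ?case using insert by simp
qed

lemma key:
  fixes \<psi> :: "nat \<Rightarrow> int \<Rightarrow> complex"
  assumes fin: "finite J" and l2: "\<And>j. j\<in>J \<Longrightarrow> in_l2 (\<psi> j)"
   and on: "\<And>j k. j\<in>J \<Longrightarrow> k\<in>J \<Longrightarrow> l2_inner (\<psi> j) (\<psi> k) = (if j=k then 1 else 0)"
  shows "((\<lambda>m. (norm (\<Sum>j\<in>J. b j * \<psi> j m))^2) has_sum (\<Sum>j\<in>J. (norm (b j))^2)) UNIV"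
proof -
  have h: "((\<lambda>m. \<Sum>j\<in>J. \<Sum>k\<in>J. (b j * cnj (b k)) * (\<psi> j m * cnj (\<psi> k m)))
      has_sum (\<Sum>j\<in>J. \<Sum>k\<in>J. (b j * cnj (b k)) * l2_inner (\<psi> j) (\<psi> k))) UNIV"
  proof (intro has_sum_finite_sum fin has_sum_cmult_right)
    fix j k assume "j \<in> J" "k \<in> J"
    thus "((\<lambda>m. \<psi> j m * cnj (\<psi> k m)) has_sum l2_inner (\<psi> j) (\<psi> k)) UNIV"
      unfolding l2_inner_def by (intro has_sum_infsum l2_prod l2)
  qed
  have v: "(\<Sum>j\<in>J. \<Sum>k\<in>J. (b j * cnj (b k)) * l2_inner (\<psi> j) (\<psi> k)) = (\<Sum>j\<in>J. complex_of_real ((norm (b j))^2))"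
  proof (rule sum.cong[OF refl])
    fix j assume j: "j \<in> J"
    have "(\<Sum>k\<in>J. (b j * cnj (b k)) * l2_inner (\<psi> j) (\<psi> k)) = (\<Sum>k\<in>J. if j = k then b j * cnj (b k) else 0)"
      by (rule sum.cong[OF refl]) (simp add: on j)
    also have "\<dots> = b j * cnj (b j)" using fin j by (simp add: sum.delta)
    finally show "(\<Sum>k\<in>J. (b j * cnj (b k)) * l2_inner (\<psi> j) (\<psi> k)) = complex_of_real ((norm (b j))^2)"
      by (simp only: complex_norm_square)
  qed
  have f: "(\<Sum>j\<in>J. \<Sum>k\<in>J. (b j * cnj (b k)) * (\<psi> j m * cnj (\<psi> k m))) = complex_of_real ((norm (\<Sum>j\<in>J. b j * \<psi> j m))^2)" for m
    unfolding complex_norm_square cnj_sum sum_product by (simp add: mult_ac)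
  have "((\<lambda>m. Re (complex_of_real ((norm (\<Sum>j\<in>J. b j * \<psi> j m))^2))) has_sum Re (\<Sum>j\<in>J. complex_of_real ((norm (b j))^2))) UNIV"
    using has_sum_Re[OF h] unfolding v f .
  thus ?thesis by simp
qed


theorem lemma2p2:
  fixes \<psi> :: "nat \<Rightarrow> int \<Rightarrow> complex" and N :: nat
  assumes l2: "\<And>j. j \<in> {1..N} \<Longrightarrow> in_l2 (\<psi> j)"
    and orthonormal: "\<And>j k. j \<in> {1..N} \<Longrightarrow> k \<in> {1..N} \<Longrightarrow>
                l2_inner (\<psi> j) (\<psi> k) = (if j = k then 1 else 0)"
  shows "(\<lambda>n. (\<Sum>j=1..N. (norm (\<psi> j n))^2)^3) summable_on UNIV
     \<and> (\<Sum>\<^sub>\<infinity>n. (\<Sum>j=1..N. (norm (\<psi> j n))^2)^3)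
         \<le> (\<Sum>j=1..N. \<Sum>\<^sub>\<infinity>n. (norm (Dfwd (\<psi> j) n))^2)"
proof -
  define J where "J = {1..N}"
  have fin: "finite J" unfolding J_def by simp
  have l2J: "\<And>j. j\<in>J \<Longrightarrow> in_l2 (\<psi> j)" using l2 unfolding J_def .
  have onJ: "\<And>j k. j\<in>J \<Longrightarrow> k\<in>J \<Longrightarrow> l2_inner (\<psi> j) (\<psi> k) = (if j=k then 1 else 0)"
    using orthonormal unfolding J_def .
  define \<rho> where "\<rho> n = (\<Sum>j\<in>J. (norm (\<psi> j n))^2)" for n
  define G where "G n m = (\<Sum>j\<in>J. cnj (\<psi> j n) * \<psi> j m)" for n m
  define E where "E n = infsum (\<lambda>m. (norm (Dfwd (G n) m))^2) UNIV" for n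
  define R where "R = (\<Sum>j\<in>J. infsum (\<lambda>m. (norm (Dfwd (\<psi> j) m))^2) UNIV)"
  have \<rho>0: "\<rho> n \<ge> 0" for n unfolding \<rho>_def by (simp add: sum_nonneg)
  have Gn: "G n = (\<lambda>m. \<Sum>j\<in>J. cnj (\<psi> j n) * \<psi> j m)" for n by (simp add: G_def fun_eq_iff)
  have Gl2: "in_l2 (G n)" for n
    unfolding Gn by (intro l2_sum fin l2_scale l2J)
  have Gnorm: "infsum (\<lambda>m. (norm (G n m))^2) UNIV = \<rho> n" for n
  proof -
    have "((\<lambda>m. (norm (\<Sum>j\<in>J. cnj (\<psi> j n) * \<psi> j m))^2) has_sum (\<Sum>j\<in>J. (norm (cnj (\<psi> j n)))^2)) UNIV"
      by (rule key[OF fin l2J onJ])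
    thus ?thesis unfolding G_def \<rho>_def by (simp add: infsumI)
  qed
  have Gnn: "norm (G n n) = \<rho> n" for n
  proof -
    have "G n n = (\<Sum>j\<in>J. complex_of_real ((norm (\<psi> j n))^2))"
      unfolding G_def complex_norm_square by (simp add: mult.commute)
    also have "\<dots> = complex_of_real (\<rho> n)" unfolding \<rho>_def by simp
    finally show ?thesis using \<rho>0[of n] by simp
  qed
  have E0: "E n \<ge> 0" for n unfolding E_def by (rule infsum_nonneg) simp
  have pw: "\<rho> n ^ 3 \<le> E n" for n
  proof -
    have sob: "(\<rho> n)^2 \<le> sqrt (\<rho> n) * sqrt (E n)"
      using sobolev[OF Gl2[of n], where n=n] unfolding Gnn Gnorm E_def .
    show ?thesis
    proof (cases "\<rho> n = 0")
      case True thus ?thesis using E0[of n] by simp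
    next
      case False
      hence pos: "\<rho> n > 0" using \<rho>0[of n] by simp
      have "((\<rho> n)^2)^2 \<le> (sqrt (\<rho> n) * sqrt (E n))^2"
        using sob by (intro power_mono) (simp_all)
      also have "\<dots> = \<rho> n * E n" using \<rho>0[of n] E0[of n] by (simp add: power_mult_distrib)
      finally have "\<rho> n * (\<rho> n)^3 \<le> \<rho> n * E n" by (simp add: power2_eq_square power3_eq_cube mult_ac)
      thus ?thesis using pos by simp
    qed
  qed
  have DG: "Dfwd (G n) m = (\<Sum>j\<in>J. cnj (\<psi> j n) * Dfwd (\<psi> j) m)" for n m
    unfolding Dfwd_def G_def by (simp add: sum_subtractf[symmetric] right_diff_distrib)
  have bessel: "(\<Sum>n\<in>F. (norm (Dfwd (G n) m))^2) \<le> (\<Sum>j\<in>J. (norm (Dfwd (\<psi> j) m))^2)"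
    if F: "finite F" for F m
  proof -
    have hs: "((\<lambda>n. (norm (\<Sum>j\<in>J. cnj (Dfwd (\<psi> j) m) * \<psi> j n))^2) has_sum (\<Sum>j\<in>J. (norm (cnj (Dfwd (\<psi> j) m)))^2)) UNIV"
      by (rule key[OF fin l2J onJ])
    have eq: "norm (Dfwd (G n) m) = norm (\<Sum>j\<in>J. cnj (Dfwd (\<psi> j) m) * \<psi> j n)" for n
    proof -
      have "norm (\<Sum>j\<in>J. cnj (Dfwd (\<psi> j) m) * \<psi> j n) = norm (cnj (\<Sum>j\<in>J. cnj (Dfwd (\<psi> j) m) * \<psi> j n))"
        by (simp only: complex_mod_cnj)
      also have "cnj (\<Sum>j\<in>J. cnj (Dfwd (\<psi> j) m) * \<psi> j n) = Dfwd (G n) m"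
        unfolding DG by (simp add: mult.commute)
      finally show ?thesis by simp
    qed
    have "(\<Sum>n\<in>F. (norm (Dfwd (G n) m))^2) = (\<Sum>n\<in>F. (norm (\<Sum>j\<in>J. cnj (Dfwd (\<psi> j) m) * \<psi> j n))^2)"
      by (simp add: eq)
    also have "\<dots> \<le> infsum (\<lambda>n. (norm (\<Sum>j\<in>J. cnj (Dfwd (\<psi> j) m) * \<psi> j n))^2) UNIV"
      using hs F by (intro finite_sum_le_infsum) (auto simp: summable_on_def)
    also have "\<dots> = (\<Sum>j\<in>J. (norm (Dfwd (\<psi> j) m))^2)" using hs by (simp add: infsumI)
    finally show ?thesis .
  qed
  have Esum: "(\<lambda>m. (norm (Dfwd (G n) m))^2) summable_on UNIV" for n
    using l2_D[OF Gl2[of n]] unfolding in_l2_def .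
  have Dsum: "(\<lambda>m. (norm (Dfwd (\<psi> j) m))^2) summable_on UNIV" if "j \<in> J" for j
    using l2_D[OF l2J[OF that]] unfolding in_l2_def .
  have hsR: "((\<lambda>m. \<Sum>j\<in>J. (norm (Dfwd (\<psi> j) m))^2) has_sum R) UNIV"
    unfolding R_def by (intro has_sum_finite_sum fin has_sum_infsum Dsum)
  have finb: "sum (\<lambda>n. \<rho> n ^ 3) F \<le> R" if F: "finite F" for F
  proof -
    have hsF: "((\<lambda>m. \<Sum>n\<in>F. (norm (Dfwd (G n) m))^2) has_sum (\<Sum>n\<in>F. E n)) UNIV"
      unfolding E_def by (intro has_sum_finite_sum F has_sum_infsum Esum)
    have "sum (\<lambda>n. \<rho> n ^ 3) F \<le> (\<Sum>n\<in>F. E n)" by (intro sum_mono pw)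
    also have "\<dots> = infsum (\<lambda>m. \<Sum>n\<in>F. (norm (Dfwd (G n) m))^2) UNIV" using hsF by (simp add: infsumI)
    also have "\<dots> \<le> infsum (\<lambda>m. \<Sum>j\<in>J. (norm (Dfwd (\<psi> j) m))^2) UNIV"
      using hsF hsR bessel[OF F] by (intro infsum_mono) (auto simp: summable_on_def)
    also have "\<dots> = R" using hsR by (simp add: infsumI)
    finally show ?thesis .
  qed
  have summ: "(\<lambda>n. \<rho> n ^ 3) summable_on UNIV"
  proof (rule nonneg_bdd_above_summable_on)
    show "\<And>x. x \<in> UNIV \<Longrightarrow> 0 \<le> \<rho> x ^ 3" using \<rho>0 by simp
    show "bdd_above (sum (\<lambda>n. \<rho> n ^ 3) ` {F. F \<subseteq> UNIV \<and> finite F})"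
      by (rule bdd_aboveI2[where M=R]) (auto intro: finb)
  qed
  have le: "infsum (\<lambda>n. \<rho> n ^ 3) UNIV \<le> R"
    by (rule infsum_le_finite_sums[OF summ]) (rule finb)
  show ?thesis using summ le unfolding \<rho>_def R_def J_def by simp
qed

end
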